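(* Let $\Gamma$ be a lattice satisfying the standing assumptions below, and let $M$ be an $X$-type operator of the 3D toric code on $\Gamma$ that is a stabilizer or a logical operator, and whose support $\mathrm{supp}(M)$ (set of faces on which it acts nontrivially) is not a cut set of $\Gamma$. Then each face in $\mathrm{supp}(M)$ lies in the boundary of exactly one volume; that is, $\mathrm{supp}(M)\subseteq\mathcal{F}=\{f\in C_2(\Gamma):|\iota(f)|=1\}$.
   Context: $\Gamma$ is a finite, connected three-dimensional cell complex with edges $C_1(\Gamma)$ (partial edges allowed at the boundary), faces $C_2(\Gamma)$, volumes $C_3(\Gamma)$; $\partial(f)$ denotes the boundary edges of a face, $\partial(\nu)$ the boundary faces of a volume, $\iota(e)$ the set of faces containing edge $e$, $\iota(f)$ the set of volumes having $f$ in their boundary; for a set $A$ of edges, $\iota(A)$ is the symmetric difference of the $\iota(e)$, $e\in A$. Every face lies in the boundary of at most two volumes. Standing assumptions: (L1) $\Gamma$ has no boundaries in its interior, so that every face cycle (a sequence of faces, each lying in exactly two volumes, such that for every volume $\nu$ the faces of $\partial(\nu)$ occur an even number of times in it) equals, as a set mod 2, $\iota(A)$ for some $A\subseteq C_1(\Gamma)$; (L2) the boundary of every face of $\Gamma$ and of its dual $\Gamma^*$ is a closed path or an open path beginning and ending with partial edges; the dual complex is connected. The 3D toric code on $\Gamma$ has one qubit per face and stabilizer group generated by $B_e=\prod_{f\in\iota(e)}Z_f$ and $A_\nu=\prod_{f\in\partial(\nu)}X_f$; a logical operator is a Pauli operator commuting with all stabilizers but not in the stabilizer group (up to phase). A face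 path is a sequence of faces $\rho=(f_1,\dots,f_m)$ with pairwise distinct volumes $\Lambda(\rho)=(\nu_1,\dots,\nu_{m-1})$ such that $f_i,f_{i+1}\in\partial(\nu_i)$. A set of faces $K$ is a cut set of $\Gamma$ if there exist volumes $\nu,\nu'$ such that every face path $\rho=(f_1,\dots,f_m)$ with $f_1\in\partial(\nu)$, $f_m\in\partial(\nu')$ and $\nu,\nu'\notin\Lambda(\rho)$ satisfies $K\cap\rho\neq\emptyset$. *)

theory Defs
  imports Main
begin

text \<open>
  Cell complex data (types: 'a vertices, 'e edges, 'f faces, 'v volumes):
  V, E, F, C are the vertex/edge/face/volume sets;
  ends e = endpoints of edge e (one endpoint = partial edge);
  bdF f = boundary edges of face f;  bdV v = boundary faces of volume v.
\<close>

definition iotaE :: "'f set \<Rightarrow> ('f \<Rightarrow> 'e set) \<Rightarrow> 'e \<Rightarrow> 'f set" where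
  "iotaE F bdF e = {f \<in> F. e \<in> bdF f}"

definition iotaF :: "'v set \<Rightarrow> ('v \<Rightarrow> 'f set) \<Rightarrow> 'f \<Rightarrow> 'v set" where
  "iotaF C bdV f = {v \<in> C. f \<in> bdV v}"

text \<open>iota(A): symmetric difference of the iota(e), e in A.\<close>
definition iota_set :: "'f set \<Rightarrow> ('f \<Rightarrow> 'e set) \<Rightarrow> 'e set \<Rightarrow> 'f set" where
  "iota_set F bdF A = {f \<in> F. odd (card {e \<in> A. e \<in> bdF f})}"

definition closed_path :: "('e \<Rightarrow> 'a set) \<Rightarrow> 'e set \<Rightarrow> bool" where
  "closed_path ends S \<longleftrightarrow> (\<exists>es vs. length es \<ge> 1 \<and> length vs = length es \<and>
     distinct es \<and> distinct vs \<and> set es = S \<and>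
     (\<forall>i < length es. ends (es ! i) = {vs ! i, vs ! ((i + 1) mod length es)} \<and>
                       card (ends (es ! i)) = 2))"

definition open_partial_path :: "('e \<Rightarrow> 'a set) \<Rightarrow> 'e set \<Rightarrow> bool" where
  "open_partial_path ends S \<longleftrightarrow> (\<exists>es vs. length es \<ge> 2 \<and> length vs + 1 = length es \<and>
     distinct es \<and> distinct vs \<and> set es = S \<and>
     ends (es ! 0) = {vs ! 0} \<and>
     ends (es ! (length es - 1)) = {vs ! (length es - 2)} \<and>
     (\<forall>i. 0 < i \<and> i < length es - 1 \<longrightarrow> ends (es ! i) = {vs ! (i - 1), vs ! i}))"

definition face_cycle :: "'f set \<Rightarrow> 'v set \<Rightarrow> ('v \<Rightarrow> 'f set) \<Rightarrow> 'f list \<Rightarrow> bool" where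
  "face_cycle F C bdV fs \<longleftrightarrow> set fs \<subseteq> F \<and> (\<forall>f \<in> set fs. card (iotaF C bdV f) = 2) \<and>
     (\<forall>v \<in> C. even (length (filter (\<lambda>f. f \<in> bdV v) fs)))"

definition good_lattice ::
  "'a set \<Rightarrow> 'e set \<Rightarrow> 'f set \<Rightarrow> 'v set \<Rightarrow> ('e \<Rightarrow> 'a set) \<Rightarrow> ('f \<Rightarrow> 'e set) \<Rightarrow> ('v \<Rightarrow> 'f set) \<Rightarrow> bool"
  where
  "good_lattice V E F C ends bdF bdV \<longleftrightarrow>
     finite V \<and> finite E \<and> finite F \<and> finite C \<and>
     (\<forall>e \<in> E. ends e \<subseteq> V \<and> 1 \<le> card (ends e) \<and> card (ends e) \<le> 2) \<and>
     (\<forall>f \<in> F. bdF f \<subseteq> E) \<and> (\<forall>v \<in> C. bdV v \<subseteq> F) \<and>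
     (\<forall>f \<in> F. card (iotaF C bdV f) \<le> 2) \<and>
     \<comment> \<open>Gamma connected (1-skeleton)\<close>
     (\<forall>u \<in> V. \<forall>w \<in> V. (u, w) \<in> {(x, y). \<exists>e \<in> E. ends e = {x, y}}\<^sup>*) \<and>
     \<comment> \<open>dual complex connected\<close>
     (\<forall>u \<in> C. \<forall>w \<in> C. (u, w) \<in> {(x, y). \<exists>f \<in> F. iotaF C bdV f = {x, y}}\<^sup>*) \<and>
     \<comment> \<open>(L1)\<close>
     (\<forall>fs. face_cycle F C bdV fs \<longrightarrow>
        (\<exists>A \<subseteq> E. {f \<in> F. odd (length (filter (\<lambda>g. g = f) fs))} = iota_set F bdF A)) \<and>
     \<comment> \<open>(L2) for Gamma\<close>
     (\<forall>f \<in> F. closed_path ends (bdF f) \<or> open_partial_path ends (bdF f)) \<and>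
     \<comment> \<open>(L2) for the dual: dual face of e is iota(e), dual edge f has ends iota(f)\<close>
     (\<forall>e \<in> E. closed_path (iotaF C bdV) (iotaE F bdF e) \<or>
              open_partial_path (iotaF C bdV) (iotaE F bdF e))"

text \<open>Pauli operators up to phase: (X-support, Z-support).\<close>
type_synonym 'f pauli = "'f set \<times> 'f set"

definition pmult :: "'f pauli \<Rightarrow> 'f pauli \<Rightarrow> 'f pauli" where
  "pmult p q = ((fst p - fst q) \<union> (fst q - fst p), (snd p - snd q) \<union> (snd q - snd p))"

definition commutes :: "'f pauli \<Rightarrow> 'f pauli \<Rightarrow> bool" where
  "commutes p q \<longleftrightarrow> even (card (fst p \<inter> snd q) + card (snd p \<inter> fst q))"

inductive_set stab_group :: "'e set \<Rightarrow> 'f set \<Rightarrow> 'v set \<Rightarrow> ('f \<Rightarrow> 'e set) \<Rightarrow> ('v \<Rightarrow> 'f set) \<Rightarrow> 'f pauli set"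
  for E F C bdF bdV where
  unit: "({}, {}) \<in> stab_group E F C bdF bdV"
| B: "e \<in> E \<Longrightarrow> ({}, iotaE F bdF e) \<in> stab_group E F C bdF bdV"
| A: "v \<in> C \<Longrightarrow> (bdV v, {}) \<in> stab_group E F C bdF bdV"
| mult: "p \<in> stab_group E F C bdF bdV \<Longrightarrow> q \<in> stab_group E F C bdF bdV \<Longrightarrow>
         pmult p q \<in> stab_group E F C bdF bdV"

definition logical_op :: "'e set \<Rightarrow> 'f set \<Rightarrow> 'v set \<Rightarrow> ('f \<Rightarrow> 'e set) \<Rightarrow> ('v \<Rightarrow> 'f set) \<Rightarrow> 'f pauli \<Rightarrow> bool" where
  "logical_op E F C bdF bdV p \<longleftrightarrow> fst p \<subseteq> F \<and> snd p \<subseteq> F \<and>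
     (\<forall>s \<in> stab_group E F C bdF bdV. commutes p s) \<and> p \<notin> stab_group E F C bdF bdV"

definition face_path :: "'f set \<Rightarrow> 'v set \<Rightarrow> ('v \<Rightarrow> 'f set) \<Rightarrow> 'f list \<Rightarrow> 'v list \<Rightarrow> bool" where
  "face_path F C bdV fs vs \<longleftrightarrow> length fs = length vs + 1 \<and> set fs \<subseteq> F \<and> set vs \<subseteq> C \<and>
     distinct vs \<and> (\<forall>i < length vs. fs ! i \<in> bdV (vs ! i) \<and> fs ! (i + 1) \<in> bdV (vs ! i))"

definition cut_set :: "'f set \<Rightarrow> 'v set \<Rightarrow> ('v \<Rightarrow> 'f set) \<Rightarrow> 'f set \<Rightarrow> bool" where
  "cut_set F C bdV K \<longleftrightarrow> (\<exists>v \<in> C. \<exists>v' \<in> C. \<forall>fs vs.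
     face_path F C bdV fs vs \<and> hd fs \<in> bdV v \<and> last fs \<in> bdV v' \<and>
     v \<notin> set vs \<and> v' \<notin> set vs \<longrightarrow> set fs \<inter> K \<noteq> {})"

end

theory Submission
  imports Defs
begin

lemma closed_path_ne: "closed_path P S \<Longrightarrow> x \<in> S \<Longrightarrow> P x \<noteq> {}"
  unfolding closed_path_def by (auto simp: in_set_conv_nth)

lemma open_path_ne:
  assumes "open_partial_path P S" "x \<in> S" shows "P x \<noteq> {}"
proof -
  obtain es vs where h: "length es \<ge> 2" "length vs + 1 = length es" "set es = S"
     "P (es ! 0) = {vs ! 0}" "P (es ! (length es - 1)) = {vs ! (length es - 2)}"
     "\<forall>i. 0 < i \<and> i < length es - 1 \<longrightarrow> P (es ! i) = {vs ! (i - 1), vs ! i}"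
    using assms(1) unfolding open_partial_path_def by blast
  obtain i where i: "i < length es" "es ! i = x" using h(3) assms(2) by (auto simp: in_set_conv_nth)
  show ?thesis
  proof (cases "i = 0")
    case True then show ?thesis using h i by auto
  next
    case False
    show ?thesis
    proof (cases "i = length es - 1")
      case True then show ?thesis using h i by auto
    next
      case F2: False
      then have "0 < i \<and> i < length es - 1" using False i by auto
      then show ?thesis using h(6) i by auto
    qed
  qed
qed

lemma closed_path_S_ne: "closed_path P S \<Longrightarrow> S \<noteq> {}"
  unfolding closed_path_def by (auto)

lemma open_path_S_ne: "open_partial_path P S \<Longrightarrow> S \<noteq> {}"
  unfolding open_partial_path_def by (auto)

lemma nonempty_iota:
  assumes g: "good_lattice V E F C ends bdF bdV" and f: "f \<in> F"
  shows "iotaF C bdV f \<noteq> {}"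
proof -
  have "closed_path ends (bdF f) \<or> open_partial_path ends (bdF f)" using g f
    unfolding good_lattice_def by blast
  then have "bdF f \<noteq> {}" using closed_path_S_ne open_path_S_ne by blast
  then obtain e where e: "e \<in> bdF f" by blast
  have eE: "e \<in> E" using g f e unfolding good_lattice_def by blast
  have fi: "f \<in> iotaE F bdF e" using f e unfolding iotaE_def by auto
  have "closed_path (iotaF C bdV) (iotaE F bdF e) \<or> open_partial_path (iotaF C bdV) (iotaE F bdF e)"
    using g eE unfolding good_lattice_def by blast
  then show ?thesis using closed_path_ne open_path_ne fi by metis
qed

lemma two_elem: "finite X \<Longrightarrow> card X \<le> 2 \<Longrightarrow> a \<in> X \<Longrightarrow> b \<in> X \<Longrightarrow> a \<noteq> b \<Longrightarrow> X = {a,b}"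
proof -
  assume h: "finite X" "card X \<le> 2" "a \<in> X" "b \<in> X" "a \<noteq> b"
  have "{a,b} \<subseteq> X" using h by auto
  moreover have "card {a,b} = 2" using h by auto
  ultimately show ?thesis using h card_subset_eq by (metis le_antisym card_mono)
qed

lemma path_extract:
  assumes fp: "face_path F C bdV fs vs" and h1: "hd fs \<in> bdV n1" and h2: "last fs \<in> bdV n2"
    and h3: "n1 \<notin> set vs" and h4: "n2 \<notin> set vs" and c1: "n1 \<in> C" and c2: "n2 \<in> C"
    and ne: "n1 \<noteq> n2" and fin: "finite C" and le2: "\<forall>g\<in>F. card (iotaF C bdV g) \<le> 2"
  shows "\<exists>ws. length ws = Suc (length fs) \<and> hd ws = n1 \<and> last ws = n2 \<and>
    (\<forall>i<length fs. iotaF C bdV (fs!i) = {ws!i, ws!Suc i} \<and> ws!i \<noteq> ws!Suc i)"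
proof -
  define ws where "ws = n1 # vs @ [n2]"
  have L: "length fs = length vs + 1" "set fs \<subseteq> F" "set vs \<subseteq> C" "distinct vs"
     "\<forall>i < length vs. fs ! i \<in> bdV (vs ! i) \<and> fs ! (i + 1) \<in> bdV (vs ! i)"
    using fp unfolding face_path_def by auto
  have fsne: "fs \<noteq> []" using L(1) by auto
  have "\<forall>i<length fs. iotaF C bdV (fs!i) = {ws!i, ws!Suc i} \<and> ws!i \<noteq> ws!Suc i"
  proof (intro allI impI)
    fix i assume i: "i < length fs"
    have a: "ws!i \<in> C \<and> fs!i \<in> bdV (ws!i)"
    proof (cases i)
      case 0 then show ?thesis using c1 h1 fsne by (simp add: ws_def hd_conv_nth)
    next
      case (Suc j)
      then have "j < length vs" using i L(1) by auto
      then show ?thesis using L Suc by (auto simp: ws_def nth_append)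
    qed
    have b: "ws!Suc i \<in> C \<and> fs!i \<in> bdV (ws!Suc i)"
    proof (cases "i < length vs")
      case True then show ?thesis using L by (auto simp: ws_def nth_append)
    next
      case False
      then have "i = length vs" using i L(1) by auto
      then show ?thesis using c2 h2 fsne L(1) by (simp add: ws_def nth_append last_conv_nth)
    qed
    have d: "ws!i \<noteq> ws!Suc i"
    proof (cases i)
      case 0
      then show ?thesis
      proof (cases vs)
        case Nil then show ?thesis using 0 ne by (simp add: ws_def)
      next
        case (Cons x xs) then show ?thesis using 0 h3 by (simp add: ws_def)
      qed
    next
      case (Suc j)
      then have j: "j < length vs" using i L(1) by auto
      show ?thesis
      proof (cases "i < length vs")
        case True
        then show ?thesis using Suc j L(4) by (simp add: ws_def nth_append nth_eq_iff_index_eq)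
      next
        case False
        then have "i = length vs" using i L(1) by auto
        then have "ws!Suc i = n2" by (simp add: ws_def nth_append)
        moreover have "ws!i = vs!j" using Suc j by (simp add: ws_def nth_append)
        ultimately show ?thesis using h4 j nth_mem by metis
      qed
    qed
    have fi: "fs!i \<in> F" using L(2) i by auto
    have "finite (iotaF C bdV (fs!i))" using fin unfolding iotaF_def by auto
    moreover have "card (iotaF C bdV (fs!i)) \<le> 2" using le2 fi by auto
    ultimately have "iotaF C bdV (fs!i) = {ws!i, ws!Suc i}"
      using two_elem a b d unfolding iotaF_def by (metis (mono_tags, lifting) mem_Collect_eq)
    then show "iotaF C bdV (fs!i) = {ws!i, ws!Suc i} \<and> ws!i \<noteq> ws!Suc i" using d by auto
  qed
  moreover have "length ws = Suc (length fs)" "hd ws = n1" "last ws = n2"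
    using L(1) by (auto simp: ws_def)
  ultimately show ?thesis by blast
qed

lemma chain_count:
  "length ws = Suc (length fs) \<Longrightarrow>
   (\<forall>i<length fs. P (fs!i) = {ws!i, ws!Suc i} \<and> ws!i \<noteq> ws!Suc i) \<Longrightarrow>
   length (filter (\<lambda>g. v \<in> P g) fs) + of_bool (v = hd ws) + of_bool (v = last ws)
     = 2 * count_list ws v"
proof (induction fs arbitrary: ws)
  case Nil
  then obtain w where "ws = [w]" by (cases ws) auto
  then show ?case by auto
next
  case (Cons g fs)
  then obtain w ws' where ws: "ws = w # ws'" by (cases ws) auto
  have len: "length ws' = Suc (length fs)" using Cons.prems ws by auto
  have "\<forall>i<length fs. P (fs!i) = {ws'!i, ws'!Suc i} \<and> ws'!i \<noteq> ws'!Suc i"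
  proof (intro allI impI)
    fix i assume "i < length fs"
    then show "P (fs!i) = {ws'!i, ws'!Suc i} \<and> ws'!i \<noteq> ws'!Suc i"
      using Cons.prems(2) ws by (metis Suc_less_eq length_Cons nth_Cons_Suc)
  qed
  then have IH: "length (filter (\<lambda>g. v \<in> P g) fs) + of_bool (v = hd ws') + of_bool (v = last ws')
     = 2 * count_list ws' v" using Cons.IH len by blast
  have "P g = {w, ws'!0} \<and> w \<noteq> ws'!0" using Cons.prems(2) ws by force
  moreover have "hd ws' = ws'!0" using len by (cases ws') auto
  moreover have "last ws = last ws'" using len ws by (cases ws') auto
  ultimately show ?case using IH ws by auto
qed

lemma chain_parity:
  "ws \<noteq> [] \<Longrightarrow> (\<forall>i. Suc i < length ws \<longrightarrow> (Q (ws!i) \<longleftrightarrow> Q (ws!Suc i))) \<Longrightarrow> Q (hd ws) \<longleftrightarrow> Q (last ws)"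
proof (induction ws)
  case Nil then show ?case by simp
next
  case (Cons w ws)
  show ?case
  proof (cases ws)
    case Nil then show ?thesis by simp
  next
    case (Cons x xs)
    have "\<forall>i. Suc i < length ws \<longrightarrow> (Q (ws!i) \<longleftrightarrow> Q (ws!Suc i))"
      using Cons.prems(2) by (metis Suc_less_eq length_Cons nth_Cons_Suc)
    then have "Q (hd ws) \<longleftrightarrow> Q (last ws)" using Cons.IH Cons by blast
    moreover have "Q w \<longleftrightarrow> Q (hd ws)" using Cons.prems(2) Cons by force
    ultimately show ?thesis using Cons by simp
  qed
qed

lemma sum_parity: "finite S \<Longrightarrow> even (\<Sum>g\<in>S. (c g :: nat)) \<longleftrightarrow> even (card {g\<in>S. odd (c g)})"
proof (induction S rule: finite_induct)
  case empty then show ?case by simp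
next
  case (insert x S)
  have "{g\<in>insert x S. odd (c g)} = (if odd (c x) then insert x {g\<in>S. odd (c g)} else {g\<in>S. odd (c g)})"
    by auto
  then show ?case using insert by auto
qed

lemma card_symdiff_parity:
  assumes "finite X" "finite Y"
  shows "odd (card ((X - Y) \<union> (Y - X))) \<longleftrightarrow> (odd (card X) \<noteq> odd (card Y))"
proof -
  have d: "card ((X - Y) \<union> (Y - X)) = card (X - Y) + card (Y - X)"
    using assms by (intro card_Un_disjoint) auto
  have "card X = card (X - Y) + card (X \<inter> Y)"
    using card_Diff_subset_Int[of X Y] card_mono[of X "X \<inter> Y"] assms by simp
  moreover have "card Y = card (Y - X) + card (X \<inter> Y)"
    using card_Diff_subset_Int[of Y X] card_mono[of Y "Y \<inter> X"] assms by (simp add: Int_commute)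
  ultimately show ?thesis using d by auto
qed

lemma stab_X:
  assumes "p \<in> stab_group E F C bdF bdV"
  shows "\<exists>T. finite T \<and> T \<subseteq> C \<and> fst p = {g. odd (card {v\<in>T. g \<in> bdV v})}"
  using assms
proof (induction rule: stab_group.induct)
  case unit then show ?case by (intro exI[of _ "{}"]) auto
next
  case (B e) then show ?case by (intro exI[of _ "{}"]) auto
next
  case (A v)
  have "\<And>g. {w\<in>{v}. g \<in> bdV w} = (if g \<in> bdV v then {v} else {})" by auto
  then show ?case using A by (intro exI[of _ "{v}"]) auto
next
  case (mult p q)
  obtain T1 where T1: "finite T1" "T1 \<subseteq> C" "fst p = {g. odd (card {v\<in>T1. g \<in> bdV v})}"
    using mult.IH(1) by blast
  obtain T2 where T2: "finite T2" "T2 \<subseteq> C" "fst q = {g. odd (card {v\<in>T2. g \<in> bdV v})}"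
    using mult.IH(2) by blast
  define T where "T = (T1 - T2) \<union> (T2 - T1)"
  have "fst (pmult p q) = {g. odd (card {v\<in>T. g \<in> bdV v})}"
  proof -
    have "\<And>g. {v\<in>T. g \<in> bdV v} = ({v\<in>T1. g \<in> bdV v} - {v\<in>T2. g \<in> bdV v}) \<union>
       ({v\<in>T2. g \<in> bdV v} - {v\<in>T1. g \<in> bdV v})" unfolding T_def by auto
    then have "\<And>g. odd (card {v\<in>T. g \<in> bdV v}) \<longleftrightarrow>
        (odd (card {v\<in>T1. g \<in> bdV v}) \<noteq> odd (card {v\<in>T2. g \<in> bdV v}))"
      by (simp only:) (rule card_symdiff_parity, simp_all add: T1(1) T2(1))
    then show ?thesis using T1(3) T2(3) unfolding pmult_def by auto
  qed
  moreover have "finite T" "T \<subseteq> C" using T1 T2 unfolding T_def by auto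
  ultimately show ?case by blast
qed

theorem lemma5:
  fixes V :: "'a set" and E :: "'e set" and F :: "'f set" and C :: "'v set"
    and ends :: "'e \<Rightarrow> 'a set" and bdF :: "'f \<Rightarrow> 'e set" and bdV :: "'v \<Rightarrow> 'f set"
    and S :: "'f set"
  assumes "good_lattice V E F C ends bdF bdV"
    and "S \<subseteq> F"
    and "(S, {}) \<in> stab_group E F C bdF bdV \<or> logical_op E F C bdF bdV (S, {})"
    and "\<not> cut_set F C bdV S"
  shows "S \<subseteq> {f \<in> F. card (iotaF C bdV f) = 1}"
proof
  fix f assume fS: "f \<in> S"
  have G: "finite F" "finite C" "finite E" "\<forall>g\<in>F. card (iotaF C bdV g) \<le> 2"
    "\<forall>fs. face_cycle F C bdV fs \<longrightarrow>
        (\<exists>A \<subseteq> E. {f \<in> F. odd (length (filter (\<lambda>g. g = f) fs))} = iota_set F bdF A)"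
    using assms(1) unfolding good_lattice_def by blast+
  have fF: "f \<in> F" using fS assms(2) by auto
  have finI: "finite (iotaF C bdV f)" using G(2) unfolding iotaF_def by auto
  have "card (iotaF C bdV f) \<noteq> 0" using nonempty_iota[OF assms(1) fF] finI by auto
  moreover have "card (iotaF C bdV f) \<noteq> 2"
  proof
    assume c2: "card (iotaF C bdV f) = 2"
    then obtain n1 n2 where n: "iotaF C bdV f = {n1, n2}" "n1 \<noteq> n2"
      by (meson card_2_iff)
    have nC: "n1 \<in> C" "n2 \<in> C" using n unfolding iotaF_def by auto
    obtain fs vs where P: "face_path F C bdV fs vs" "hd fs \<in> bdV n1" "last fs \<in> bdV n2"
      "n1 \<notin> set vs" "n2 \<notin> set vs" "set fs \<inter> S = {}"
      using assms(4) nC unfolding cut_set_def by blast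
    obtain ws where W: "length ws = Suc (length fs)" "hd ws = n1" "last ws = n2"
      "\<forall>i<length fs. iotaF C bdV (fs!i) = {ws!i, ws!Suc i} \<and> ws!i \<noteq> ws!Suc i"
      using path_extract[OF P(1-5) nC n(2) G(2) G(4)] by blast
    have fsF: "set fs \<subseteq> F" using P(1) unfolding face_path_def by auto
    show False
      using assms(3)
    proof
      assume st: "(S, {}) \<in> stab_group E F C bdF bdV"
      obtain T where T: "finite T" "T \<subseteq> C" "S = {g. odd (card {v\<in>T. g \<in> bdV v})}"
        using stab_X[OF st] by auto
      have key: "\<And>g a b. iotaF C bdV g = {a, b} \<Longrightarrow> a \<noteq> b \<Longrightarrow>
           (g \<in> S \<longleftrightarrow> ((a \<in> T) \<noteq> (b \<in> T)))"
      proof -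
        fix g a b assume ab: "iotaF C bdV g = {a, b}" "a \<noteq> b"
        have eq: "{v\<in>T. g \<in> bdV v} = T \<inter> {a, b}"
          using ab(1) T(2) unfolding iotaF_def by blast
        show "g \<in> S \<longleftrightarrow> ((a \<in> T) \<noteq> (b \<in> T))" using ab(2) unfolding T(3)
          by (cases "a \<in> T"; cases "b \<in> T") (simp_all add: eq Int_insert_right)
      qed
      have "\<forall>i. Suc i < length ws \<longrightarrow> ((ws!i \<in> T) \<longleftrightarrow> (ws!Suc i \<in> T))"
      proof (intro allI impI)
        fix i assume "Suc i < length ws"
        then have i: "i < length fs" using W(1) by auto
        then have "fs!i \<notin> S" using P(6) nth_mem by blast
        then show "(ws!i \<in> T) \<longleftrightarrow> (ws!Suc i \<in> T)" using key W(4) i by blast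
      qed
      then have "(hd ws \<in> T) \<longleftrightarrow> (last ws \<in> T)"
      proof -
        have "ws \<noteq> []" using W(1) by auto
        then show ?thesis using chain_parity[of ws "\<lambda>v. v \<in> T"] \<open>\<forall>i. Suc i < length ws \<longrightarrow> _\<close> by blast
      qed
      moreover have "(n1 \<in> T) \<noteq> (n2 \<in> T)" using key[OF n] fS by blast
      ultimately show False using W(2,3) by simp
    next
      assume lo: "logical_op E F C bdF bdV (S, {})"
      define cyc where "cyc = f # fs"
      have fc: "face_cycle F C bdV cyc"
        unfolding face_cycle_def
      proof (intro conjI ballI)
        show "set cyc \<subseteq> F" using fF fsF by (auto simp: cyc_def)
      next
        fix g assume "g \<in> set cyc"
        then have "g = f \<or> (\<exists>i<length fs. g = fs!i)" by (auto simp: cyc_def in_set_conv_nth)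
        then show "card (iotaF C bdV g) = 2" using c2 W(4) by auto
      next
        fix v assume vC: "v \<in> C"
        have "filter (\<lambda>g. g \<in> bdV v) cyc = filter (\<lambda>g. v \<in> iotaF C bdV g) cyc"
          using vC unfolding iotaF_def by (intro filter_cong) auto
        moreover have "length (filter (\<lambda>g. v \<in> iotaF C bdV g) cyc) =
            length (filter (\<lambda>g. v \<in> iotaF C bdV g) fs) + of_bool (v = hd ws) + of_bool (v = last ws)"
          using n W(2,3) by (auto simp: cyc_def)
        ultimately show "even (length (filter (\<lambda>g. g \<in> bdV v) cyc))"
          using chain_count[OF W(1) W(4), of v] by simp
      qed
      then obtain A where A: "A \<subseteq> E"
        "{g \<in> F. odd (length (filter (\<lambda>x. x = g) cyc))} = iota_set F bdF A"
        using G(5) by blast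
      have fnot: "f \<notin> set fs" using fS P(6) by auto
      have "S \<inter> iota_set F bdF A = {f}"
      proof -
        have "f \<in> iota_set F bdF A"
        proof -
          have "filter (\<lambda>x. x = f) fs = []" using fnot by (auto simp: filter_empty_conv)
          then have "f \<in> {g \<in> F. odd (length (filter (\<lambda>x. x = g) cyc))}"
            using fF by (simp add: cyc_def)
          then show ?thesis using A(2) by blast
        qed
        moreover have "g = f" if "g \<in> S" "g \<in> iota_set F bdF A" for g
        proof -
          have "g \<in> {g \<in> F. odd (length (filter (\<lambda>x. x = g) cyc))}" using that(2) A(2) by blast
          then have "odd (length (filter (\<lambda>x. x = g) cyc))" by blast
          then have "filter (\<lambda>x. x = g) cyc \<noteq> []" by (metis list.size(3) even_zero)
          then have "g \<in> set cyc" by (auto simp: filter_empty_conv)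
          then show ?thesis using that(1) P(6) by (auto simp: cyc_def)
        qed
        ultimately show ?thesis using fS by blast
      qed
      moreover have "even (card (S \<inter> iota_set F bdF A))"
      proof -
        have finS: "finite S" using assms(2) G(1) finite_subset by blast
        have finA: "finite A" using A(1) G(3) finite_subset by blast
        have ce: "even (card (S \<inter> iotaE F bdF e))" if "e \<in> E" for e
        proof -
          have "({}, iotaE F bdF e) \<in> stab_group E F C bdF bdV" using that by (rule stab_group.B)
          then have "commutes (S, {}) ({}, iotaE F bdF e)" using lo unfolding logical_op_def by blast
          then show ?thesis unfolding commutes_def by simp
        qed
        have cs: "card (S \<inter> iotaE F bdF e) = (\<Sum>g\<in>S. of_bool (e \<in> bdF g))" for e
        proof -
          have "S \<inter> iotaE F bdF e = {g\<in>S. e \<in> bdF g}" using assms(2) unfolding iotaE_def by auto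
          moreover have "{g\<in>S. e \<in> bdF g} = S \<inter> {g. e \<in> bdF g}" by blast
          ultimately show ?thesis using finS by (simp add: sum.If_cases)
        qed
        have cs2: "card {e\<in>A. e \<in> bdF g} = (\<Sum>e\<in>A. of_bool (e \<in> bdF g))" for g
        proof -
          have "{e\<in>A. e \<in> bdF g} = A \<inter> {e. e \<in> bdF g}" by blast
          then show ?thesis using finA by (simp add: sum.If_cases)
        qed
        have "even (\<Sum>e\<in>A. card (S \<inter> iotaE F bdF e))"
          using ce A(1) by (intro dvd_sum) auto
        also have "(\<Sum>e\<in>A. card (S \<inter> iotaE F bdF e)) = (\<Sum>g\<in>S. card {e\<in>A. e \<in> bdF g})"
          unfolding cs cs2 by (rule sum.swap)
        finally have "even (\<Sum>g\<in>S. card {e\<in>A. e \<in> bdF g})" .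
        then have "even (card {g\<in>S. odd (card {e\<in>A. e \<in> bdF g})})"
          using sum_parity[OF finS, of "\<lambda>g. card {e\<in>A. e \<in> bdF g}"] by simp
        moreover have "{g\<in>S. odd (card {e\<in>A. e \<in> bdF g})} = S \<inter> iota_set F bdF A"
          using assms(2) unfolding iota_set_def by auto
        ultimately show ?thesis by simp
      qed
      ultimately show False by simp
    qed
  qed
  moreover have "card (iotaF C bdV f) \<le> 2" using G(4) fF by auto
  ultimately show "f \<in> {f \<in> F. card (iotaF C bdV f) = 1}" using fF by auto
qed

end
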